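(* Consider finite games in which all players have the same nonnegative utility function $u$ with $\max_S u>0$, with the solution set being the set $\mathrm{NE}$ of pure Nash equilibria. For every such game, $\mathrm{PoS}=\mathrm{PoTS}=1$. On the other hand, for every $\varepsilon>0$ there is such a game with $\mathrm{PoA}<\varepsilon$, and for every $\delta>0$ there is such a game with $\mathrm{PoA}>0$ and $\mathrm{PoTA}\le\mathrm{PoSTA}\le\delta\cdot\mathrm{PoA}$.
   Context: $\mathrm{sw}(s)=\sum_iu_i(s)$. A transition of $\mathrm{NE}$ is a profile $t$ with $t_i=d_i$ for some $d\in\mathrm{NE}$, for every $i$; $T(\mathrm{NE})$ is the set of transitions. $\mathrm{BR}_i(s_{-i})$ is the set of best responses of $i$. A stable transition is $s\in T(\mathrm{NE})$ such that for every $i$ with $s_i\notin\mathrm{BR}_i(s_{-i})$ there is $j\neq i$ with $s_j\notin\mathrm{BR}_j(s_{-j})$ and some $\hat s_j\in\mathrm{BR}_j(s_{-j})$ with $s_i\in\mathrm{BR}_i(\hat s_j,s_{-\{i,j\}})$; $ST(\mathrm{NE})$ is the set of stable transitions. $\mathrm{PoA}=\min_{\mathrm{NE}}\mathrm{sw}/\max_S\mathrm{sw}$, $\mathrm{PoS}=\max_{\mathrm{NE}}\mathrm{sw}/\max_S\mathrm{sw}$, $\mathrm{PoTA}=\min_{T(\mathrm{NE})}\mathrm{sw}/\max_S\mathrm{sw}$, $\mathrm{PoTS}=\max_{T(\mathrm{NE})}\mathrm{sw}/\max_S\mathrm{sw}$, $\mathrm{PoSTA}=\min_{ST(\mathrm{NE})}\mathrm{sw}/\max_S\mathrm{sw}$.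 *)

theory Defs
  imports Complex_Main "HOL-Library.FuncSet"
begin

text \<open>A finite game with players 0..n-1, finite strategy sets S i, and one common
  utility function u shared by all players (u_i = u for every i).
  Profiles are the extensional functions in PiE {..<n} S.\<close>

definition profiles :: "nat \<Rightarrow> (nat \<Rightarrow> 'a set) \<Rightarrow> (nat \<Rightarrow> 'a) set" where
  "profiles n S = PiE {..<n} S"

definition common_game :: "nat \<Rightarrow> (nat \<Rightarrow> 'a set) \<Rightarrow> ((nat \<Rightarrow> 'a) \<Rightarrow> real) \<Rightarrow> bool" where
  "common_game n S u \<longleftrightarrow> n \<ge> 1 \<and> (\<forall>i<n. finite (S i) \<and> S i \<noteq> {})
     \<and> (\<forall>s\<in>profiles n S. 0 \<le> u s) \<and> Max (u ` profiles n S) > 0"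

definition sw :: "nat \<Rightarrow> ((nat \<Rightarrow> 'a) \<Rightarrow> real) \<Rightarrow> (nat \<Rightarrow> 'a) \<Rightarrow> real" where
  "sw n u s = (\<Sum>i<n. u s)"

definition NE :: "nat \<Rightarrow> (nat \<Rightarrow> 'a set) \<Rightarrow> ((nat \<Rightarrow> 'a) \<Rightarrow> real) \<Rightarrow> (nat \<Rightarrow> 'a) set" where
  "NE n S u = {s \<in> profiles n S. \<forall>i<n. \<forall>t\<in>S i. u (s(i := t)) \<le> u s}"

definition BR :: "(nat \<Rightarrow> 'a set) \<Rightarrow> ((nat \<Rightarrow> 'a) \<Rightarrow> real) \<Rightarrow> nat \<Rightarrow> (nat \<Rightarrow> 'a) \<Rightarrow> 'a set" where
  "BR S u i s = {t \<in> S i. \<forall>t'\<in>S i. u (s(i := t')) \<le> u (s(i := t))}"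

definition TNE :: "nat \<Rightarrow> (nat \<Rightarrow> 'a set) \<Rightarrow> ((nat \<Rightarrow> 'a) \<Rightarrow> real) \<Rightarrow> (nat \<Rightarrow> 'a) set" where
  "TNE n S u = {t \<in> profiles n S. \<forall>i<n. \<exists>d\<in>NE n S u. t i = d i}"

definition STNE :: "nat \<Rightarrow> (nat \<Rightarrow> 'a set) \<Rightarrow> ((nat \<Rightarrow> 'a) \<Rightarrow> real) \<Rightarrow> (nat \<Rightarrow> 'a) set" where
  "STNE n S u = {s \<in> TNE n S u. \<forall>i<n. s i \<notin> BR S u i s \<longrightarrow>
      (\<exists>j<n. j \<noteq> i \<and> s j \<notin> BR S u j s \<and>
         (\<exists>sj\<in>BR S u j s. s i \<in> BR S u i (s(j := sj))))}"

definition opt_sw :: "nat \<Rightarrow> (nat \<Rightarrow> 'a set) \<Rightarrow> ((nat \<Rightarrow> 'a) \<Rightarrow> real) \<Rightarrow> real" where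
  "opt_sw n S u = Max (sw n u ` profiles n S)"

definition PoA where "PoA n S u = Min (sw n u ` NE n S u) / opt_sw n S u"
definition PoS where "PoS n S u = Max (sw n u ` NE n S u) / opt_sw n S u"
definition PoTA where "PoTA n S u = Min (sw n u ` TNE n S u) / opt_sw n S u"
definition PoTS where "PoTS n S u = Max (sw n u ` TNE n S u) / opt_sw n S u"
definition PoSTA where "PoSTA n S u = Min (sw n u ` STNE n S u) / opt_sw n S u"

end

theory Submission
  imports Defs
begin

lemma Max_at: "finite A \<Longrightarrow> x \<in> A \<Longrightarrow> (\<forall>y\<in>A. f y \<le> (f x::real)) \<Longrightarrow> Max (f ` A) = f x"
  by (rule Max_eqI) auto

lemma Min_at: "finite A \<Longrightarrow> x \<in> A \<Longrightarrow> (\<forall>y\<in>A. f x \<le> (f y::real)) \<Longrightarrow> Min (f ` A) = f x"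
  by (rule Min_eqI) auto

lemma sw_eq: "sw n u s = real n * u s"
  by (simp add: sw_def)

lemma prof_upd: "s \<in> profiles n S \<Longrightarrow> i < n \<Longrightarrow> t \<in> S i \<Longrightarrow> s(i := t) \<in> profiles n S"
  unfolding profiles_def PiE_iff extensional_def by simp

lemma part1:
  assumes g: "common_game n S u"
  shows "PoS n S u = 1 \<and> PoTS n S u = 1"
proof -
  let ?P = "profiles n S"
  have fin: "finite ?P" using g unfolding common_game_def profiles_def
    by (intro finite_PiE) auto
  have ne: "?P \<noteq> {}" using g unfolding common_game_def profiles_def
    by (simp add: PiE_eq_empty_iff)
  have "Max (u ` ?P) \<in> u ` ?P" using fin ne by (intro Max_in) auto
  then obtain s where s: "s \<in> ?P" "u s = Max (u ` ?P)" by (elim imageE) simp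
  have smax: "\<forall>y\<in>?P. u y \<le> u s" using s fin by simp
  have pos: "u s > 0" "n \<ge> 1" using s g unfolding common_game_def by auto
  have sNE: "s \<in> NE n S u" unfolding NE_def using s(1) smax prof_upd[OF s(1)] by simp
  have NEsub: "NE n S u \<subseteq> ?P" unfolding NE_def by auto
  have sT: "s \<in> TNE n S u" unfolding TNE_def using s(1) sNE by auto
  have Tsub: "TNE n S u \<subseteq> ?P" unfolding TNE_def by auto
  have swm: "\<forall>y\<in>?P. sw n u y \<le> sw n u s" using smax by (simp add: sw_eq mult_left_mono)
  have opt: "opt_sw n S u = sw n u s" unfolding opt_sw_def using Max_at[OF fin s(1) swm] .
  have swpos: "sw n u s > 0" using pos by (simp add: sw_eq)
  have "Max (sw n u ` NE n S u) = sw n u s"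
    by (rule Max_at[OF finite_subset[OF NEsub fin] sNE]) (use swm NEsub in blast)
  moreover have "Max (sw n u ` TNE n S u) = sw n u s"
    by (rule Max_at[OF finite_subset[OF Tsub fin] sT]) (use swm Tsub in blast)
  ultimately show ?thesis using opt swpos by (simp add: PoS_def PoTS_def)
qed

definition pr :: "nat \<Rightarrow> nat \<Rightarrow> nat \<Rightarrow> nat" where
  "pr a b = (\<lambda>k. undefined)(0 := a, 1 := b)"

definition S2 :: "nat \<Rightarrow> nat set" where "S2 i = {0, 1}"

lemma prof2: "profiles 2 S2 = {pr 0 0, pr 0 1, pr 1 0, pr 1 1}"
proof (rule set_eqI)
  fix s :: "nat \<Rightarrow> nat"
  show "s \<in> profiles 2 S2 \<longleftrightarrow> s \<in> {pr 0 0, pr 0 1, pr 1 0, pr 1 1}"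
  proof
    assume "s \<in> profiles 2 S2"
    then have a: "s 0 \<in> {0,1}" "s 1 \<in> {0,1}" "\<forall>k\<ge>2. s k = undefined"
      by (auto simp: profiles_def PiE_def extensional_def Pi_def S2_def)
    have "s = pr (s 0) (s 1)"
    proof
      fix k show "s k = pr (s 0) (s 1) k"
        using a(3) by (cases "k = 0"; cases "k = 1") (auto simp: pr_def)
    qed
    then show "s \<in> {pr 0 0, pr 0 1, pr 1 0, pr 1 1}" using a by auto
  next
    assume "s \<in> {pr 0 0, pr 0 1, pr 1 0, pr 1 1}"
    moreover have "pr a b \<in> profiles 2 S2" if "a \<in> {0,1}" "b \<in> {0,1}" for a b
      unfolding profiles_def PiE_def extensional_def Pi_def S2_def
    proof (intro IntI CollectI allI impI)
      fix x :: nat assume "x \<in> {..<2}"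
      then have "x = 0 \<or> x = 1" by auto
      then show "pr a b x \<in> {0, 1}" using that by (auto simp: pr_def)
    next
      fix x :: nat assume "x \<notin> {..<2}"
      then show "pr a b x = undefined" by (simp add: pr_def)
    qed
    ultimately show "s \<in> profiles 2 S2" by auto
  qed
qed

lemma fin2: "finite (profiles 2 S2)" by (simp add: prof2)

lemma pr_simps[simp]: "pr a b 0 = a" "pr a b 1 = b" "pr a b (Suc 0) = b" by (auto simp: pr_def)

lemma pr_upd[simp]: "(pr a b)(0 := c) = pr c b" "(pr a b)(Suc 0 := c) = pr a c"
  by (auto simp: pr_def fun_eq_iff)

lemma two_cases: "(i::nat) < 2 \<Longrightarrow> i = 0 \<or> i = 1" by auto

lemma pr_in: "a \<in> {0,1} \<Longrightarrow> b \<in> {0,1} \<Longrightarrow> pr a b \<in> profiles 2 S2"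
  using prof2 by auto

lemma game2:
  assumes "\<forall>s. 0 \<le> u s" "u (pr 0 0) > 0"
  shows "common_game 2 S2 u"
proof -
  have "u (pr 0 0) \<le> Max (u ` profiles 2 S2)"
    using fin2 pr_in[of 0 0] by (intro Max_ge) auto
  then show ?thesis unfolding common_game_def using assms by (simp add: S2_def)
qed

lemma optsw2:
  assumes "\<forall>s. u s \<le> 1" "u (pr 0 0) = 1"
  shows "opt_sw 2 S2 u = 2"
proof -
  have "opt_sw 2 S2 u = sw 2 u (pr 0 0)" unfolding opt_sw_def
    by (rule Max_at[OF fin2 pr_in]) (use assms in \<open>auto simp: sw_eq\<close>)
  then show ?thesis using assms by (simp add: sw_eq)
qed

lemma NE_sub: "NE n S u \<subseteq> profiles n S" unfolding NE_def by auto
lemma TNE_sub: "TNE n S u \<subseteq> profiles n S" unfolding TNE_def by auto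
lemma STNE_sub: "STNE n S u \<subseteq> TNE n S u" unfolding STNE_def by auto

definition u2 :: "real \<Rightarrow> (nat \<Rightarrow> nat) \<Rightarrow> real" where
  "u2 e s = (if s 0 = s 1 then (if s 0 = 0 then 1 else e) else 0)"

lemma part2:
  assumes "\<epsilon> > (0::real)"
  shows "\<exists>(n::nat) (S::nat \<Rightarrow> nat set) u. common_game n S u \<and> PoA n S u < \<epsilon>"
proof -
  define e where "e = min \<epsilon> 1 / 2"
  have e: "0 < e" "e < \<epsilon>" "e \<le> 1" using assms by (auto simp: e_def)
  let ?u = "u2 e"
  have g: "common_game 2 S2 ?u" by (rule game2) (use e in \<open>auto simp: u2_def\<close>)
  have o: "opt_sw 2 S2 ?u = 2" by (rule optsw2) (use e in \<open>auto simp: u2_def\<close>)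
  have ne: "pr 1 1 \<in> NE 2 S2 ?u" unfolding NE_def
  proof (intro CollectI conjI allI impI ballI)
    show "pr 1 1 \<in> profiles 2 S2" by (rule pr_in) auto
  next
    fix i t assume "i < (2::nat)" "t \<in> S2 i"
    then have "i = 0 \<or> i = 1" "t = 0 \<or> t = 1" by (auto simp: S2_def)
    then show "?u ((pr 1 1)(i := t)) \<le> ?u (pr 1 1)" using e by (auto simp: u2_def)
  qed
  have "Min (sw 2 ?u ` NE 2 S2 ?u) \<le> sw 2 ?u (pr 1 1)"
    using finite_subset[OF NE_sub fin2] ne by (intro Min_le) auto
  then have "PoA 2 S2 ?u \<le> e" unfolding PoA_def o by (simp add: sw_eq u2_def)
  then show ?thesis using g e by force
qed

definition u3 :: "(nat \<Rightarrow> nat) \<Rightarrow> real" where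
  "u3 s = (if s 0 = s 1 then 1 else 0)"

lemma BR3: "t \<in> BR S2 u3 i s \<longleftrightarrow> t \<in> {0,1} \<and> (\<forall>t'\<in>{0,1}. u3 (s(i := t')) \<le> u3 (s(i := t)))"
  unfolding BR_def S2_def by auto

lemma part3:
  assumes "\<delta> > (0::real)"
  shows "\<exists>(n::nat) (S::nat \<Rightarrow> nat set) u. common_game n S u \<and> PoA n S u > 0
               \<and> PoTA n S u \<le> PoSTA n S u \<and> PoSTA n S u \<le> \<delta> * PoA n S u"
proof -
  have g: "common_game 2 S2 u3" by (rule game2) (auto simp: u3_def)
  have o: "opt_sw 2 S2 u3 = 2" by (rule optsw2) (auto simp: u3_def)
  have allNE: "u3 s = 1" if "s \<in> NE 2 S2 u3" for s
  proof -
    have p: "s \<in> profiles 2 S2" using that NE_sub by blast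
    have "s 1 \<in> S2 0" using p unfolding profiles_def S2_def PiE_iff by auto
    then have "u3 (s(0 := s 1)) \<le> u3 s" using that unfolding NE_def by auto
    then show ?thesis by (auto simp: u3_def split: if_splits)
  qed
  have n00: "pr 0 0 \<in> NE 2 S2 u3" unfolding NE_def
  proof (intro CollectI conjI allI impI ballI)
    show "pr 0 0 \<in> profiles 2 S2" by (rule pr_in) auto
  next
    fix i t assume "i < (2::nat)" "t \<in> S2 i"
    then have "i = 0 \<or> i = 1" "t = 0 \<or> t = 1" by (auto simp: S2_def)
    then show "u3 ((pr 0 0)(i := t)) \<le> u3 (pr 0 0)" by (auto simp: u3_def)
  qed
  have n11: "pr 1 1 \<in> NE 2 S2 u3" unfolding NE_def
  proof (intro CollectI conjI allI impI ballI)
    show "pr 1 1 \<in> profiles 2 S2" by (rule pr_in) auto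
  next
    fix i t assume "i < (2::nat)" "t \<in> S2 i"
    then have "i = 0 \<or> i = 1" "t = 0 \<or> t = 1" by (auto simp: S2_def)
    then show "u3 ((pr 1 1)(i := t)) \<le> u3 (pr 1 1)" by (auto simp: u3_def)
  qed
  have "Min (sw 2 u3 ` NE 2 S2 u3) = sw 2 u3 (pr 0 0)"
    by (rule Min_at[OF finite_subset[OF NE_sub fin2] n00]) (use allNE n00 in \<open>simp add: sw_eq\<close>)
  then have poa: "PoA 2 S2 u3 = 1" unfolding PoA_def o by (simp add: sw_eq u3_def)
  have t01: "pr 0 1 \<in> TNE 2 S2 u3" unfolding TNE_def
  proof (intro CollectI conjI allI impI)
    show "pr 0 1 \<in> profiles 2 S2" by (rule pr_in) auto
  next
    fix i assume "i < (2::nat)"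
    then have "i = 0 \<or> i = 1" by auto
    then show "\<exists>d\<in>NE 2 S2 u3. pr 0 1 i = d i"
    proof
      assume "i = 0" then show ?thesis using n00 by (intro bexI[of _ "pr 0 0"]) auto
    next
      assume "i = 1" then show ?thesis using n11 by (intro bexI[of _ "pr 1 1"]) auto
    qed
  qed
  have s01: "pr 0 1 \<in> STNE 2 S2 u3" unfolding STNE_def
  proof (intro CollectI conjI allI impI t01)
    fix i assume "i < (2::nat)"
    then have "i = 0 \<or> i = 1" by auto
    then show "\<exists>j<2. j \<noteq> i \<and> pr 0 1 j \<notin> BR S2 u3 j (pr 0 1) \<and>
         (\<exists>sj\<in>BR S2 u3 j (pr 0 1). pr 0 1 i \<in> BR S2 u3 i ((pr 0 1)(j := sj)))"
    proof
      assume i: "i = 0"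
      have a: "pr 0 1 1 \<notin> BR S2 u3 1 (pr 0 1)" unfolding BR3
        by (auto simp: u3_def intro!: bexI[of _ 0])
      have b: "(0::nat) \<in> BR S2 u3 1 (pr 0 1)" unfolding BR3 by (auto simp: u3_def)
      have c: "pr 0 1 0 \<in> BR S2 u3 0 ((pr 0 1)(1 := 0))" unfolding BR3 by (auto simp: u3_def)
      show ?thesis using a b c i by (intro exI[of _ 1]) auto
    next
      assume i: "i = 1"
      have a: "pr 0 1 0 \<notin> BR S2 u3 0 (pr 0 1)" unfolding BR3
        by (auto simp: u3_def intro!: bexI[of _ 1])
      have b: "(1::nat) \<in> BR S2 u3 0 (pr 0 1)" unfolding BR3 by (auto simp: u3_def)
      have c: "pr 0 1 1 \<in> BR S2 u3 1 ((pr 0 1)(0 := 1))" unfolding BR3 by (auto simp: u3_def)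
      show ?thesis using a b c i by (intro exI[of _ 0]) auto
    qed
  qed
  have nn: "\<forall>s. 0 \<le> sw 2 u3 s" by (simp add: sw_eq u3_def)
  have STsub: "STNE 2 S2 u3 \<subseteq> profiles 2 S2" using STNE_sub TNE_sub by blast
  have "Min (sw 2 u3 ` STNE 2 S2 u3) = sw 2 u3 (pr 0 1)"
    by (rule Min_at[OF finite_subset[OF STsub fin2] s01]) (use nn in \<open>auto simp: sw_eq u3_def\<close>)
  then have p1: "PoSTA 2 S2 u3 = 0" unfolding PoSTA_def by (simp add: sw_eq u3_def)
  have "Min (sw 2 u3 ` TNE 2 S2 u3) = sw 2 u3 (pr 0 1)"
    by (rule Min_at[OF finite_subset[OF TNE_sub fin2] t01]) (use nn in \<open>auto simp: sw_eq u3_def\<close>)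
  then have p2: "PoTA 2 S2 u3 = 0" unfolding PoTA_def by (simp add: sw_eq u3_def)
  show ?thesis using g poa p1 p2 assms by (intro exI[of _ 2] exI[of _ S2] exI[of _ u3]) simp
qed

theorem proposition3:
  shows "(\<forall>(n::nat) (S::nat \<Rightarrow> 'a set) u. common_game n S u \<longrightarrow>
            PoS n S u = 1 \<and> PoTS n S u = 1)
       \<and> (\<forall>\<epsilon>::real. \<epsilon> > 0 \<longrightarrow>
            (\<exists>(n::nat) (S::nat \<Rightarrow> nat set) u. common_game n S u \<and> PoA n S u < \<epsilon>))
       \<and> (\<forall>\<delta>::real. \<delta> > 0 \<longrightarrow>
            (\<exists>(n::nat) (S::nat \<Rightarrow> nat set) u. common_game n S u \<and> PoA n S u > 0
               \<and> PoTA n S u \<le> PoSTA n S u \<and> PoSTA n S u \<le> \<delta> * PoA n S u))"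
  using part1 part2 part3 by blast

end
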